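(* Fix $0<\varepsilon<1$ and let $n$ be sufficiently large with respect to $\varepsilon$; let $m=\lceil n/\log^8 n\rceil$. Let $P=\{(u_1,v_1),\dots,(u_s,v_s)\}$ be an $s$-pairing in $[n]$ with $s\ge\varepsilon n$, and let $\pi:[n]\to[m]$ be a map that is $\varepsilon$-respectful of $P$ and satisfies $|\pi^{-1}(x)|\le 2n/m$ for all $x\in[m]$. Let $\Pi$ be the set of all unordered pairs $\big\{\{\pi(u_i),\pi(u_j)\},\{\pi(v_i),\pi(v_j)\}\big\}$ over all $i,j\in[s]$ with $\pi(u_i)\neq\pi(u_j)$, $\pi(v_i)\ne\pi(v_j)$ and $\{\pi(u_i),\pi(u_j)\}\neq\{\pi(v_i),\pi(v_j)\}$. Then $|\Pi|\ge\varepsilon^4 n^2/6$.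
   Context: Logarithms are natural. An $s$-pairing in $[n]$ is a collection $\{(u_1,v_1),\dots,(u_s,v_s)\}$ of pairs where $u_1,\dots,u_s,v_1,\dots,v_s$ are distinct elements of $[n]$. A map $\pi:[n]\to[m]$ is $\varepsilon$-respectful of it if there is $I\subseteq[s]$ with $|I|\ge\varepsilon s$ such that $\pi(u_i)\ne\pi(v_i)$ for all $i\in I$ and the pairs $\{\pi(u_i),\pi(v_i)\}$, $i\in I$, are pairwise distinct. *)

theory Defs
  imports Complex_Main
begin

definition is_pairing :: "nat \<Rightarrow> nat \<Rightarrow> (nat \<Rightarrow> nat) \<Rightarrow> (nat \<Rightarrow> nat) \<Rightarrow> bool" where
  "is_pairing n s u v \<longleftrightarrow>
     u ` {1..s} \<subseteq> {1..n} \<and> v ` {1..s} \<subseteq> {1..n} \<and>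
     inj_on u {1..s} \<and> inj_on v {1..s} \<and> u ` {1..s} \<inter> v ` {1..s} = {}"

definition respectful :: "real \<Rightarrow> (nat \<Rightarrow> nat) \<Rightarrow> nat \<Rightarrow> (nat \<Rightarrow> nat) \<Rightarrow> (nat \<Rightarrow> nat) \<Rightarrow> bool" where
  "respectful eps f s u v \<longleftrightarrow>
     (\<exists>I \<subseteq> {1..s}. real (card I) \<ge> eps * real s \<and>
        (\<forall>i\<in>I. f (u i) \<noteq> f (v i)) \<and>
        inj_on (\<lambda>i. {f (u i), f (v i)}) I)"

definition Pi_set :: "(nat \<Rightarrow> nat) \<Rightarrow> nat \<Rightarrow> (nat \<Rightarrow> nat) \<Rightarrow> (nat \<Rightarrow> nat) \<Rightarrow> nat set set set" where
  "Pi_set f s u v =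
     {{{f (u i), f (u j)}, {f (v i), f (v j)}} | i j.
        i \<in> {1..s} \<and> j \<in> {1..s} \<and> f (u i) \<noteq> f (u j) \<and> f (v i) \<noteq> f (v j) \<and>
        {f (u i), f (u j)} \<noteq> {f (v i), f (v j)}}"

end

theory Submission
  imports Defs "HOL-Real_Asymp.Real_Asymp"
begin

lemma fiber4:
  fixes T :: "(nat \<times> nat \<times> nat \<times> nat) set"
  assumes fin: "finite T" and nsw: "\<And>a b c d. (a,b,c,d) \<in> T \<Longrightarrow> (c,d,a,b) \<notin> T"
  shows "card T \<le> 4 * card ((\<lambda>(a,b,c,d). {{a,b},{c,d}}) ` T)"
proof -
  define E where "E = (\<lambda>(a::nat,b::nat,c::nat,d::nat). {{a,b},{c,d}})"
  define g where "g = (\<lambda>(a::nat,b::nat,c::nat,d::nat). if (a,b,c,d) \<in> T then (a,b,c,d) else (c,d,a,b))"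
  have fib: "card {t\<in>T. E t = e} \<le> 4" if "e \<in> E ` T" for e
  proof -
    from that obtain a b c d where abcd: "(a,b,c,d) \<in> T" "e = {{a,b},{c,d}}"
      unfolding E_def by auto
    have sub: "{t\<in>T. E t = e} \<subseteq> g ` set [(a,b,c,d),(b,a,c,d),(a,b,d,c),(b,a,d,c)]"
    proof
      fix t assume t: "t \<in> {t\<in>T. E t = e}"
      obtain a' b' c' d' where tt: "t = (a',b',c',d')" by (cases t) auto
      have tT: "(a',b',c',d') \<in> T" and eq: "{{a',b'},{c',d'}} = {{a,b},{c,d}}"
        using t tt abcd unfolding E_def by auto
      have ns: "(c',d',a',b') \<notin> T" using nsw tT by blast
      from eq have "({a',b'} = {a,b} \<and> {c',d'} = {c,d}) \<or> ({a',b'} = {c,d} \<and> {c',d'} = {a,b})"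
        by (simp add: doubleton_eq_iff)
      then show "t \<in> g ` set [(a,b,c,d),(b,a,c,d),(a,b,d,c),(b,a,d,c)]"
        unfolding tt
      proof (elim disjE conjE)
        assume "{a',b'} = {a,b}" "{c',d'} = {c,d}"
        then show "(a',b',c',d') \<in> g ` set [(a,b,c,d),(b,a,c,d),(a,b,d,c),(b,a,d,c)]"
          using tT unfolding g_def doubleton_eq_iff by (elim disjE conjE; force)
      next
        assume "{a',b'} = {c,d}" "{c',d'} = {a,b}"
        then show "(a',b',c',d') \<in> g ` set [(a,b,c,d),(b,a,c,d),(a,b,d,c),(b,a,d,c)]"
          using tT ns unfolding g_def doubleton_eq_iff by (elim disjE conjE; force)
      qed
    qed
    have "card {t\<in>T. E t = e} \<le> card (g ` set [(a,b,c,d),(b,a,c,d),(a,b,d,c),(b,a,d,c)])"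
      using sub by (intro card_mono) auto
    also have "\<dots> \<le> card (set [(a,b,c,d),(b,a,c,d),(a,b,d,c),(b,a,d,c)])"
      by (rule card_image_le) simp
    also have "\<dots> \<le> length [(a,b,c,d),(b,a,c,d),(a,b,d,c),(b,a,d,c)]"
      by (rule card_length)
    finally show ?thesis by simp
  qed
  have "T = (\<Union>e\<in>E ` T. {t\<in>T. E t = e})" by auto
  then have "card T = card (\<Union>e\<in>E ` T. {t\<in>T. E t = e})" by simp
  also have "\<dots> \<le> (\<Sum>e\<in>E ` T. card {t\<in>T. E t = e})"
    by (rule card_UN_le) (simp add: fin)
  also have "\<dots> \<le> card (E ` T) * 4"
    using sum_bounded_above[of "E ` T" "\<lambda>e. card {t\<in>T. E t = e}" 4] fib by simp
  finally show ?thesis unfolding E_def by simp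
qed

lemma class_bound:
  assumes pair: "is_pairing n s u v" and fmap: "f ` {1..n} \<subseteq> {1..m}"
    and I: "I \<subseteq> {1..s}"
    and cls: "\<forall>x\<in>{1..m}. real (card {y \<in> {1..n}. f y = x}) \<le> 2 * real n / real m"
    and i: "i \<in> I"
  shows "real (card {j\<in>I. f (u j) = f (u i)}) \<le> 2 * real n / real m"
proof -
  have uinj: "inj_on u {1..s}" and urng: "u ` {1..s} \<subseteq> {1..n}"
    using pair unfolding is_pairing_def by auto
  have uj: "u j \<in> {1..n}" if "j \<in> I" for j using urng I that by (meson image_subset_iff subsetD)
  have "card {j\<in>I. f (u j) = f (u i)} = card (u ` {j\<in>I. f (u j) = f (u i)})"
    by (rule card_image[symmetric]) (rule inj_on_subset[OF uinj], use I in auto)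
  also have "\<dots> \<le> card {y \<in> {1..n}. f y = f (u i)}"
    using uj by (intro card_mono) auto
  finally have "real (card {j\<in>I. f (u j) = f (u i)}) \<le> real (card {y \<in> {1..n}. f y = f (u i)})"
    by simp
  moreover have "f (u i) \<in> {1..m}" using uj[OF i] fmap by (meson image_subset_iff)
  ultimately show ?thesis using cls by fastforce
qed

lemma bad_bound:
  assumes finI: "finite I"
    and cb: "\<And>i. i \<in> I \<Longrightarrow> real (card {j\<in>I. g j = g i}) \<le> c"
  shows "real (card {(i,j)\<in>I\<times>I. g i = g j}) \<le> real (card I) * c"
proof -
  have "{(i,j)\<in>I\<times>I. g i = g j} = (\<Union>i\<in>I. {i} \<times> {j\<in>I. g j = g i})" by auto
  then have "card {(i,j)\<in>I\<times>I. g i = g j} \<le> (\<Sum>i\<in>I. card ({i} \<times> {j\<in>I. g j = g i}))"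
    using card_UN_le[OF finI, of "\<lambda>i. {i} \<times> {j\<in>I. g j = g i}"] by simp
  also have "\<dots> = (\<Sum>i\<in>I. card {j\<in>I. g j = g i})"
    by (simp add: card_cartesian_product)
  finally have "real (card {(i,j)\<in>I\<times>I. g i = g j}) \<le> real (\<Sum>i\<in>I. card {j\<in>I. g j = g i})"
    by (simp only: of_nat_le_iff)
  also have "\<dots> = (\<Sum>i\<in>I. real (card {j\<in>I. g j = g i}))" by simp
  also have "\<dots> \<le> real (card I) * c"
    using sum_bounded_above[of I "\<lambda>i. real (card {j\<in>I. g j = g i})" c] cb by simp
  finally show ?thesis .
qed

lemma key:
  assumes pair: "is_pairing n s u v" and fmap: "f ` {1..n} \<subseteq> {1..m}"
    and I: "I \<subseteq> {1..s}" and neq: "\<forall>i\<in>I. f (u i) \<noteq> f (v i)"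
    and inj: "inj_on (\<lambda>i. {f (u i), f (v i)}) I"
    and cls: "\<forall>x\<in>{1..m}. real (card {y \<in> {1..n}. f y = x}) \<le> 2 * real n / real m"
  shows "4 * real (card (Pi_set f s u v)) \<ge> real (card I)^2 - 4 * real (card I) * real n / real m"
proof -
  have finI: "finite I" using I finite_subset by blast
  have pair': "is_pairing n s v u" using pair unfolding is_pairing_def by auto
  define B1 where "B1 = {(i,j)\<in>I\<times>I. f (u i) = f (u j)}"
  define B2 where "B2 = {(i,j)\<in>I\<times>I. f (v i) = f (v j)}"
  define G where "G = I\<times>I - (B1 \<union> B2)"
  have b1: "real (card B1) \<le> real (card I) * (2 * real n / real m)"
    unfolding B1_def
    by (rule bad_bound[OF finI]) (rule class_bound[OF pair fmap I cls])
  have b2: "real (card B2) \<le> real (card I) * (2 * real n / real m)"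
    unfolding B2_def
    by (rule bad_bound[OF finI]) (rule class_bound[OF pair' fmap I cls])
  have sub: "B1 \<union> B2 \<subseteq> I \<times> I" unfolding B1_def B2_def by auto
  have "card G = card (I\<times>I) - card (B1 \<union> B2)"
    unfolding G_def by (rule card_Diff_subset) (use sub finI in \<open>auto intro: finite_subset\<close>)
  moreover have "card (B1 \<union> B2) \<le> card (I\<times>I)"
    by (rule card_mono) (use sub finI in auto)
  moreover have "card (B1 \<union> B2) \<le> card B1 + card B2" by (rule card_Un_le)
  ultimately have "real (card G) \<ge> real (card I)^2 - real (card B1) - real (card B2)"
    by (simp add: card_cartesian_product power2_eq_square of_nat_diff)
  moreover have "4 * real (card I) * real n / real m = real (card I) * (2 * real n / real m) + real (card I) * (2 * real n / real m)"
    by (simp add: field_simps)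
  ultimately have cG: "real (card G) \<ge> real (card I)^2 - 4 * real (card I) * real n / real m"
    using b1 b2 by linarith
  define K where "K = (\<lambda>(i,j). (f (u i), f (u j), f (v i), f (v j)))"
  have Gprop: "i \<in> I \<and> j \<in> I \<and> f (u i) \<noteq> f (u j) \<and> f (v i) \<noteq> f (v j)" if "(i,j) \<in> G" for i j
    using that unfolding G_def B1_def B2_def by auto
  have pinj: "i = i'" if "i \<in> I" "i' \<in> I" "{f (u i), f (v i)} = {f (u i'), f (v i')}" for i i'
    using inj that unfolding inj_on_def by blast
  have Kinj: "inj_on K G"
  proof (rule inj_onI)
    fix p q assume p: "p \<in> G" and q: "q \<in> G" and e: "K p = K q"
    obtain i j where pp: "p = (i,j)" by (cases p)
    obtain i' j' where qq: "q = (i',j')" by (cases q)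
    from e have e1: "{f (u i), f (v i)} = {f (u i'), f (v i')}" and e2: "{f (u j), f (v j)} = {f (u j'), f (v j')}"
      unfolding K_def pp qq by auto
    have ij: "i \<in> I" "j \<in> I" using Gprop[of i j] p pp by auto
    have ij': "i' \<in> I" "j' \<in> I" using Gprop[of i' j'] q qq by auto
    have "i = i'" using pinj[OF ij(1) ij'(1) e1] .
    moreover have "j = j'" using pinj[OF ij(2) ij'(2) e2] .
    ultimately show "p = q" by (simp add: pp qq)
  qed
  define T where "T = K ` G"
  have finG: "finite G" unfolding G_def using finI by auto
  have nsw: "(c,d,a,b) \<notin> T" if "(a,b,c,d) \<in> T" for a b c d
  proof
    assume c: "(c,d,a,b) \<in> T"
    from that obtain i j where ij: "(i,j) \<in> G" "a = f (u i)" "b = f (u j)" "c = f (v i)" "d = f (v j)"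
      unfolding T_def K_def by auto
    from c obtain i' j' where ij': "(i',j') \<in> G" "c = f (u i')" "d = f (u j')" "a = f (v i')" "b = f (v j')"
      unfolding T_def K_def by auto
    have "{f (u i), f (v i)} = {f (u i'), f (v i')}" using ij ij' by auto
    then have "i = i'" using pinj Gprop ij(1) ij'(1) by blast
    then show False using ij ij' neq Gprop by metis
  qed
  have c4: "card T \<le> 4 * card ((\<lambda>(a,b,c,d). {{a,b},{c,d}}) ` T)"
    by (rule fiber4) (use finG nsw in \<open>auto simp: T_def\<close>)
  have imsub: "(\<lambda>(a,b,c,d). {{a,b},{c,d}}) ` T \<subseteq> Pi_set f s u v"
  proof
    fix z assume "z \<in> (\<lambda>(a,b,c,d). {{a,b},{c,d}}) ` T"
    then obtain i j where ij: "(i,j) \<in> G" and z: "z = {{f (u i), f (u j)}, {f (v i), f (v j)}}"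
      unfolding T_def K_def by auto
    have g: "i \<in> I" "j \<in> I" "f (u i) \<noteq> f (u j)" "f (v i) \<noteq> f (v j)" using Gprop ij by auto
    have "{f (u i), f (u j)} \<noteq> {f (v i), f (v j)}"
    proof
      assume h: "{f (u i), f (u j)} = {f (v i), f (v j)}"
      then have "f (u i) = f (v j) \<and> f (u j) = f (v i)" using g neq by (auto simp: doubleton_eq_iff)
      then have "{f (u i), f (v i)} = {f (u j), f (v j)}" by auto
      then have "i = j" using pinj g by blast
      then show False using g by simp
    qed
    then show "z \<in> Pi_set f s u v" unfolding Pi_set_def z using g I by blast
  qed
  have finPi: "finite (Pi_set f s u v)"
  proof (rule finite_subset)
    show "Pi_set f s u v \<subseteq> (\<lambda>(i,j). {{f (u i), f (u j)}, {f (v i), f (v j)}}) ` ({1..s} \<times> {1..s})"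
      unfolding Pi_set_def by auto
  qed simp
  have "card G = card T" unfolding T_def by (rule card_image[symmetric, OF Kinj])
  also have "\<dots> \<le> 4 * card (Pi_set f s u v)"
    using c4 card_mono[OF finPi imsub] by linarith
  finally have "real (card G) \<le> 4 * real (card (Pi_set f s u v))" by linarith
  with cG show ?thesis by linarith
qed


theorem lemma5p2:
  fixes eps :: real
  assumes "0 < eps" "eps < 1"
  shows "\<exists>N. \<forall>n \<ge> N. \<forall>s u v (f :: nat \<Rightarrow> nat).
    let m = nat \<lceil>real n / (ln (real n)) ^ 8\<rceil> in
    is_pairing n s u v \<and> real s \<ge> eps * real n \<and>
    f ` {1..n} \<subseteq> {1..m} \<and> respectful eps f s u v \<and>
    (\<forall>x \<in> {1..m}. real (card {y \<in> {1..n}. f y = x}) \<le> 2 * real n / real m)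
    \<longrightarrow> real (card (Pi_set f s u v)) \<ge> eps ^ 4 * (real n)\<^sup>2 / 6"
proof -
  have lim: "filterlim (\<lambda>n::nat. real n / ln (real n) ^ 8) at_top sequentially"
    by real_asymp
  then have "eventually (\<lambda>n. 12 / eps^2 \<le> real n / ln (real n) ^ 8) sequentially"
    using lim unfolding filterlim_at_top by blast
  then obtain N where N: "\<And>n. n \<ge> N \<Longrightarrow> 12 / eps^2 \<le> real n / ln (real n) ^ 8"
    by (auto simp: eventually_sequentially)
  show ?thesis
  proof (intro exI[of _ N] allI impI)
    fix n s u v and f :: "nat \<Rightarrow> nat"
    assume n: "n \<ge> N"
    define m where "m = nat \<lceil>real n / (ln (real n)) ^ 8\<rceil>"
    show "let m = nat \<lceil>real n / (ln (real n)) ^ 8\<rceil> in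
      is_pairing n s u v \<and> real s \<ge> eps * real n \<and>
      f ` {1..n} \<subseteq> {1..m} \<and> respectful eps f s u v \<and>
      (\<forall>x \<in> {1..m}. real (card {y \<in> {1..n}. f y = x}) \<le> 2 * real n / real m)
      \<longrightarrow> real (card (Pi_set f s u v)) \<ge> eps ^ 4 * (real n)\<^sup>2 / 6"
      unfolding Let_def m_def[symmetric]
    proof (intro impI, elim conjE)
      assume pair: "is_pairing n s u v" and sn: "real s \<ge> eps * real n"
        and fmap: "f ` {1..n} \<subseteq> {1..m}" and resp: "respectful eps f s u v"
        and cls: "\<forall>x \<in> {1..m}. real (card {y \<in> {1..n}. f y = x}) \<le> 2 * real n / real m"
      obtain I where I: "I \<subseteq> {1..s}" and cI: "real (card I) \<ge> eps * real s"
        and neq: "\<forall>i\<in>I. f (u i) \<noteq> f (v i)" and inj: "inj_on (\<lambda>i. {f (u i), f (v i)}) I"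
        using resp unfolding respectful_def by blast
      have k: "4 * real (card (Pi_set f s u v)) \<ge> real (card I)^2 - 4 * real (card I) * real n / real m"
        by (rule key[OF pair fmap I neq inj cls])
      have e2: "eps^2 > 0" using assms by simp
      have x: "12 / eps^2 \<le> real n / ln (real n) ^ 8" using N n by blast
      have "12 / eps^2 > 0" using e2 by simp
      then have xpos: "real n / ln (real n) ^ 8 \<ge> 0" using x by linarith
      have "real m = real_of_int \<lceil>real n / (ln (real n)) ^ 8\<rceil>"
        unfolding m_def using xpos by simp
      also have "\<dots> \<ge> real n / ln (real n) ^ 8" by (rule le_of_int_ceiling)
      finally have mge: "real m \<ge> 12 / eps^2" using x by linarith
      have mpos: "real m > 0" using mge \<open>12 / eps^2 > 0\<close> by linarith
      have inv: "1 / real m \<le> eps^2 / 12"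
        using mge mpos e2 by (simp add: field_simps)
      define c where "c = real (card I)"
      define e where "e = eps^2 * real n"
      have e0: "e \<ge> 0" unfolding e_def using e2 by simp
      have ce: "c \<ge> e"
      proof -
        have "eps * real s \<ge> eps * (eps * real n)" using sn assms by (intro mult_left_mono) auto
        then show ?thesis using cI unfolding c_def e_def by (simp add: power2_eq_square)
      qed
      have c0: "c \<ge> 0" using ce e0 by linarith
      have "4 * real (card I) * real n / real m = 4 * c * real n * (1 / real m)"
        unfolding c_def by simp
      also have "\<dots> \<le> 4 * c * real n * (eps^2 / 12)"
        using inv c0 by (intro mult_left_mono) auto
      also have "\<dots> = c * e / 3" unfolding e_def by simp
      finally have t: "4 * real (card I) * real n / real m \<le> c * e / 3" .
      have "(c - e) * (c + 2 * e / 3) \<ge> 0" using ce e0 by (intro mult_nonneg_nonneg) auto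
      moreover have "(c - e) * (c + 2 * e / 3) = c^2 - c * e / 3 - 2 * e^2 / 3"
        by (simp add: field_simps power2_eq_square)
      ultimately have "c^2 - c * e / 3 \<ge> 2 * e^2 / 3" by linarith
      with k t have "4 * real (card (Pi_set f s u v)) \<ge> 2 * e^2 / 3" unfolding c_def by linarith
      moreover have "e^2 = eps^4 * (real n)^2" unfolding e_def by (simp add: power_mult_distrib)
      ultimately show "real (card (Pi_set f s u v)) \<ge> eps ^ 4 * (real n)\<^sup>2 / 6" by simp
    qed
  qed
qed

end
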